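(* Let $A$ be a real $m\times n$ matrix, $\mathbf b\in\mathbb R^m$, $\mathbf c\in\mathbb R^n$ (row vector), such that the linear program $\max\mathbf c\mathbf x$ s.t. $A\mathbf x\le\mathbf b$, $\mathbf x\ge0$ has unique optimal primal and dual solutions $\mathbf x^*$, $\mathbf y^*$. Then for every primal feasible $\mathbf x$, \[ \|\mathbf x_{\bar U}\|\le\frac{\mathbf c(\mathbf x^*-\mathbf x)}{\beta_D(A,\mathbf b,\mathbf c)}. \]
   Context: The dual is $\min\mathbf y\mathbf b$ s.t. $\mathbf yA\ge\mathbf c$, $\mathbf y\ge0$. $U=\{i:x^*_i>0\}$, $\bar U$ its complement in $\{1,\dots,n\}$, $\mathbf x_{\bar U}$ the restriction of $\mathbf x$ to coordinates in $\bar U$, and $\beta_D(A,\mathbf b,\mathbf c)=\min_{i\in\bar U}(\mathbf y^*A_{:,i}-c_i)$, with $A_{:,i}$ the $i$th column of $A$. $\|\cdot\|$ is the Euclidean norm. *)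

theory Defs
  imports "HOL-Analysis.Analysis"
begin

definition primal_feasible :: "real^'n^'m \<Rightarrow> real^'m \<Rightarrow> real^'n \<Rightarrow> bool" where
  "primal_feasible A b x \<longleftrightarrow> (\<forall>j. (A *v x) $ j \<le> b $ j) \<and> (\<forall>i. 0 \<le> x $ i)"

definition primal_optimal :: "real^'n^'m \<Rightarrow> real^'m \<Rightarrow> real^'n \<Rightarrow> real^'n \<Rightarrow> bool" where
  "primal_optimal A b c x \<longleftrightarrow> primal_feasible A b x \<and>
     (\<forall>x'. primal_feasible A b x' \<longrightarrow> c \<bullet> x' \<le> c \<bullet> x)"

definition dual_feasible :: "real^'n^'m \<Rightarrow> real^'n \<Rightarrow> real^'m \<Rightarrow> bool" where
  "dual_feasible A c y \<longleftrightarrow> (\<forall>i. c $ i \<le> (y v* A) $ i) \<and> (\<forall>j. 0 \<le> y $ j)"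

definition dual_optimal :: "real^'n^'m \<Rightarrow> real^'m \<Rightarrow> real^'n \<Rightarrow> real^'m \<Rightarrow> bool" where
  "dual_optimal A b c y \<longleftrightarrow> dual_feasible A c y \<and>
     (\<forall>y'. dual_feasible A c y' \<longrightarrow> y \<bullet> b \<le> y' \<bullet> b)"

definition Ubar :: "real^'n \<Rightarrow> 'n set" where
  "Ubar xs = {i. \<not> (xs $ i > 0)}"

definition beta_D :: "real^'n^'m \<Rightarrow> real^'n \<Rightarrow> real^'n \<Rightarrow> real^'m \<Rightarrow> real" where
  "beta_D A c xs ys = Min ((\<lambda>i. (ys v* A) $ i - c $ i) ` Ubar xs)"

definition restr_norm :: "real^'n \<Rightarrow> 'n set \<Rightarrow> real" where
  "restr_norm x S = sqrt (\<Sum>i\<in>S. (x $ i)^2)"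

end

theory Submission
  imports Defs
begin

lemma farkas:
  fixes f :: "'i::finite \<Rightarrow> 'a::euclidean_space"
  assumes H: "\<And>w. (\<forall>i. f i \<bullet> w \<le> 0) \<Longrightarrow> g \<bullet> w \<le> 0"
  shows "\<exists>\<mu>. (\<forall>i. 0 \<le> \<mu> i) \<and> g = (\<Sum>i\<in>UNIV. \<mu> i *\<^sub>R f i)"
proof -
  define K where "K = {v. \<exists>\<mu>. (\<forall>i. 0 \<le> \<mu> i) \<and> v = (\<Sum>i\<in>UNIV. \<mu> i *\<^sub>R f i)}"
  have rK: "range f \<subseteq> K"
  proof
    fix v assume "v \<in> range f"
    then obtain i where v: "v = f i" by auto
    show "v \<in> K" unfolding K_def
      by (rule CollectI, rule exI[of _ "\<lambda>j. if j = i then 1 else 0"]) (simp add: v sum.remove[of UNIV i])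
  qed
  have cK: "convex_cone K"
    unfolding convex_cone_def conic_def convex_def
  proof (intro conjI allI impI ballI)
    show "K \<noteq> {}" using rK by auto
  next
    fix x y :: 'a and u v :: real
    assume "x \<in> K" "y \<in> K" "0 \<le> u" "0 \<le> v" "u + v = 1"
    then obtain \<mu> \<nu> where m: "\<forall>i. 0 \<le> \<mu> i" "x = (\<Sum>i\<in>UNIV. \<mu> i *\<^sub>R f i)"
       and n: "\<forall>i. 0 \<le> \<nu> i" "y = (\<Sum>i\<in>UNIV. \<nu> i *\<^sub>R f i)" unfolding K_def by auto
    show "u *\<^sub>R x + v *\<^sub>R y \<in> K" unfolding K_def
      apply (rule CollectI, rule exI[of _ "\<lambda>i. u * \<mu> i + v * \<nu> i"])
      using m n \<open>0 \<le> u\<close> \<open>0 \<le> v\<close>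
      by (simp add: scaleR_sum_right scaleR_add_left sum.distrib)
  next
    fix x :: 'a and c :: real assume "x \<in> K" "0 \<le> c"
    then obtain \<mu> where m: "\<forall>i. 0 \<le> \<mu> i" "x = (\<Sum>i\<in>UNIV. \<mu> i *\<^sub>R f i)" unfolding K_def by auto
    show "c *\<^sub>R x \<in> K" unfolding K_def
      apply (rule CollectI, rule exI[of _ "\<lambda>i. c * \<mu> i"])
      using m \<open>0 \<le> c\<close> by (simp add: scaleR_sum_right)
  qed
  define C where "C = convex_cone hull (range f)"
  have CK: "C \<subseteq> K" unfolding C_def using hull_minimal[of "range f" K convex_cone] rK cK by blast
  have "g \<in> C"
  proof (rule ccontr)
    assume "g \<notin> C"
    moreover have "closed C" unfolding C_def by (rule closed_convex_cone_hull) simp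
    moreover have "convex C" unfolding C_def by (rule convex_convex_cone_hull)
    ultimately obtain a b where ab: "a \<bullet> g < b" "\<forall>x\<in>C. a \<bullet> x > b"
      using separating_hyperplane_closed_point by blast
    have "0 \<in> C" unfolding C_def by (rule convex_cone_hull_contains_0)
    with ab have b0: "b < 0" by auto
    have nn: "a \<bullet> x \<ge> 0" if "x \<in> C" for x
    proof (rule ccontr)
      assume "\<not> a \<bullet> x \<ge> 0"
      hence neg: "a \<bullet> x < 0" by simp
      define r where "r = b / (a \<bullet> x)"
      have "r \<ge> 0" unfolding r_def using neg b0 by (simp add: divide_nonpos_neg)
      hence "r *\<^sub>R x \<in> C" unfolding C_def using that C_def convex_cone_hull_mul by blast
      hence "a \<bullet> (r *\<^sub>R x) > b" using ab by auto
      moreover have "a \<bullet> (r *\<^sub>R x) = b" unfolding r_def using neg by simp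
      ultimately show False by simp
    qed
    have "g \<bullet> (-a) \<le> 0"
    proof (rule H, rule allI)
      fix i have "f i \<in> C" unfolding C_def by (rule hull_inc) simp
      then show "f i \<bullet> (-a) \<le> 0" using nn[of "f i"] by (simp add: inner_commute)
    qed
    then show False using ab b0 by (simp add: inner_commute)
  qed
  then show ?thesis using CK unfolding K_def by auto
qed


lemma sum_UNIV_option: "(\<Sum>u\<in>(UNIV :: 'a::finite option set). h u) = h None + (\<Sum>a\<in>UNIV. h (Some a))"
  by (simp add: UNIV_option_conv sum.reindex)

lemma sum_UNIV_Plus: "(\<Sum>u\<in>(UNIV :: ('a::finite + 'b::finite) set). h u) = (\<Sum>a\<in>UNIV. h (Inl a)) + (\<Sum>a\<in>UNIV. h (Inr a))"
  by (subst UNIV_Plus_UNIV[symmetric], subst sum.Plus) auto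

lemma mv_row: "(A *v x) $ j = A $ j \<bullet> (x :: real^'n)"
  by (simp add: matrix_vector_mult_def inner_vec_def mult.commute)

lemma vm_inner: "((y::real^'m) v* A) \<bullet> (x::real^'n) = y \<bullet> (A *v x)"
  by (simp add: inner_vec_def vector_matrix_mult_def matrix_vector_mult_def
      sum_distrib_left sum_distrib_right mult.assoc mult.left_commute) (rule sum.swap)

lemma weak_duality:
  assumes "primal_feasible A b x" "dual_feasible A c y"
  shows "c \<bullet> x \<le> y \<bullet> b"
proof -
  have "c \<bullet> x = (\<Sum>k\<in>UNIV. c $ k * x $ k)" by (simp add: inner_vec_def)
  also have "\<dots> \<le> (\<Sum>k\<in>UNIV. (y v* A) $ k * x $ k)"
    using assms by (intro sum_mono mult_right_mono) (auto simp: primal_feasible_def dual_feasible_def)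
  also have "\<dots> = y \<bullet> (A *v x)" using vm_inner[of y A x] by (simp add: inner_vec_def)
  also have "\<dots> = (\<Sum>j\<in>UNIV. y $ j * (A *v x) $ j)" by (simp add: inner_vec_def)
  also have "\<dots> \<le> (\<Sum>j\<in>UNIV. y $ j * b $ j)"
    using assms by (intro sum_mono mult_left_mono) (auto simp: primal_feasible_def dual_feasible_def)
  also have "\<dots> = y \<bullet> b" by (simp add: inner_vec_def)
  finally show ?thesis .
qed


lemma key:
  fixes A :: "real^'n^'m" and b :: "real^'m" and c :: "real^'n"
    and xs :: "real^'n" and ys :: "real^'m"
  assumes po: "primal_optimal A b c xs"
    and pu: "\<forall>x'. primal_optimal A b c x' \<longrightarrow> x' = xs"
    and do: "dual_optimal A b c ys"
    and du: "\<forall>y'. dual_optimal A b c y' \<longrightarrow> y' = ys"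
    and iU: "i \<in> Ubar xs"
  shows "c $ i < (ys v* A) $ i \<and> ys \<bullet> b = c \<bullet> xs"
proof -
  define z where "z = c \<bullet> xs"
  have xsf: "primal_feasible A b xs" using po by (simp add: primal_optimal_def)
  have ysf: "dual_feasible A c ys" using do by (simp add: dual_optimal_def)
  have xsi: "xs $ i = 0" using iU xsf by (auto simp: Ubar_def primal_feasible_def intro: antisym)
  have zle: "\<And>x'. primal_feasible A b x' \<Longrightarrow> c \<bullet> x' \<le> z"
    using po by (simp add: primal_optimal_def z_def)
  define f :: "('m + 'n) option option \<Rightarrow> (real^'n) \<times> real" where
    "f = (\<lambda>u. case u of None \<Rightarrow> (0, -1) | Some None \<Rightarrow> (-c, z)
        | Some (Some (Inl j)) \<Rightarrow> (A $ j, - b $ j) | Some (Some (Inr k)) \<Rightarrow> (- axis k 1, 0))"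
  define g :: "(real^'n) \<times> real" where "g = (axis i 1, 0)"
  have H: "g \<bullet> w \<le> 0" if hw: "\<forall>u. f u \<bullet> w \<le> 0" for w
  proof -
    obtain x t where w: "w = (x, t)" by (cases w)
    have t0: "0 \<le> t" using hw[rule_format, of None] by (simp add: f_def w)
    have cx: "z * t \<le> c \<bullet> x" using hw[rule_format, of "Some None"] by (simp add: f_def w)
    have Ax: "(A *v x) $ j \<le> b $ j * t" for j
      using hw[rule_format, of "Some (Some (Inl j))"] by (simp add: f_def w mv_row)
    have xk: "0 \<le> x $ k" for k
      using hw[rule_format, of "Some (Some (Inr k))"] by (simp add: f_def w inner_axis')
    show ?thesis
    proof (rule ccontr)
      assume "\<not> g \<bullet> w \<le> 0"
      hence xi: "x $ i > 0" by (simp add: g_def w inner_axis')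
      show False
      proof (cases "t = 0")
        case True
        define x' where "x' = xs + x"
        have "primal_feasible A b x'"
          using xsf Ax xk True unfolding primal_feasible_def x'_def
          by (auto simp: matrix_vector_right_distrib add_nonneg_nonneg) (metis add_mono add_0_right)
        moreover have "z \<le> c \<bullet> x'" using cx True by (simp add: x'_def inner_add_right z_def)
        ultimately have "primal_optimal A b c x'" using zle by (force simp: primal_optimal_def intro: order_trans)
        hence "x' = xs" using pu by blast
        hence "x = 0" by (simp add: x'_def)
        thus False using xi by simp
      next
        case False
        hence tp: "t > 0" using t0 by simp
        define x' where "x' = (1 / t) *\<^sub>R x"
        have "primal_feasible A b x'"
          unfolding primal_feasible_def x'_def
        proof (intro conjI allI)
          fix j show "(A *v ((1 / t) *\<^sub>R x)) $ j \<le> b $ j"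
            using Ax[of j] tp by (simp add: matrix_vector_mult_scaleR divide_le_eq mult.commute)
        next
          fix k show "0 \<le> ((1 / t) *\<^sub>R x) $ k" using xk[of k] tp by simp
        qed
        moreover have "z \<le> c \<bullet> x'" using cx tp by (simp add: x'_def le_divide_eq mult.commute)
        ultimately have "primal_optimal A b c x'" using zle by (force simp: primal_optimal_def intro: order_trans)
        hence "x' = xs" using pu by blast
        hence "x' $ i = 0" using xsi by simp
        thus False using xi tp by (simp add: x'_def)
      qed
    qed
  qed
  obtain \<mu> where mu: "\<forall>u. 0 \<le> \<mu> u" and geq: "g = (\<Sum>u\<in>UNIV. \<mu> u *\<^sub>R f u)"
    using farkas[of f g] H by blast
  define y :: "real^'m" where "y = (\<chi> j. \<mu> (Some (Some (Inl j))))"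
  define lam where "lam = \<mu> (Some None)"
  define s where "s = (\<lambda>k. \<mu> (Some (Some (Inr k))))"
  define st where "st = \<mu> None"
  have E1: "(if k = i then 1 else 0) = (y v* A) $ k - s k - lam * c $ k" for k
  proof -
    have "fst g $ k = (\<Sum>u\<in>UNIV. \<mu> u * (fst (f u) $ k))"
      using geq by (simp add: fst_sum)
    also have "\<dots> = (y v* A) $ k - s k - lam * c $ k"
      by (simp add: sum_UNIV_option sum_UNIV_Plus f_def y_def s_def lam_def
          vector_matrix_mult_def mult.commute axis_def if_distrib cong: if_cong)
    finally show ?thesis by (simp add: g_def axis_def)
  qed
  have E2: "0 = - st + lam * z - y \<bullet> b"
  proof -
    have "snd g = (\<Sum>u\<in>UNIV. \<mu> u * snd (f u))"
      using geq by (simp add: snd_sum)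
    also have "\<dots> = - st + lam * z - y \<bullet> b"
      by (simp add: sum_UNIV_option sum_UNIV_Plus f_def y_def st_def lam_def
          inner_vec_def sum_negf)
    finally show ?thesis by (simp add: g_def)
  qed
  have ypos: "0 \<le> y $ j" for j using mu by (simp add: y_def)
  have dA: "lam * c $ k + (if k = i then 1 else 0) \<le> (y v* A) $ k" for k
    using E1[of k] mu by (simp add: s_def)
  have yb: "y \<bullet> b \<le> lam * z" using E2 mu[rule_format, of None] by (simp add: st_def)
  have lam0: "0 \<le> lam" using mu by (simp add: lam_def)
  show ?thesis
  proof (cases "lam = 0")
    case True
    define y' where "y' = ys + y"
    have "dual_feasible A c y'"
      unfolding dual_feasible_def
    proof (intro conjI allI)
      fix k
      have e: "((ys + y) v* A) $ k = (ys v* A) $ k + (y v* A) $ k"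
        by (simp add: vector_matrix_mult_def sum.distrib distrib_right)
      have "0 \<le> (y v* A) $ k" using dA[of k] True by (simp split: if_splits)
      then show "c $ k \<le> (y' v* A) $ k" using ysf e unfolding y'_def dual_feasible_def
        by (smt (verit))
    next
      fix j show "0 \<le> y' $ j" using ysf ypos[of j] by (simp add: y'_def dual_feasible_def)
    qed
    moreover have "y' \<bullet> b \<le> ys \<bullet> b" using yb True by (simp add: y'_def inner_add_left)
    ultimately have "dual_optimal A b c y'" using do by (force simp: dual_optimal_def)
    hence "y' = ys" using du by blast
    hence "y = 0" by (simp add: y'_def)
    thus ?thesis using dA[of i] True by simp
  next
    case False
    hence lp: "lam > 0" using lam0 by simp
    define y' where "y' = (1 / lam) *\<^sub>R y"
    have y'A: "(y' v* A) $ k = (y v* A) $ k / lam" for k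
      by (simp add: y'_def scaleR_vector_matrix_assoc)
    have y'f: "dual_feasible A c y'"
      unfolding dual_feasible_def
    proof (intro conjI allI)
      fix k show "c $ k \<le> (y' v* A) $ k"
        using dA[of k] lp by (simp add: y'A le_divide_eq mult.commute split: if_splits)
    next
      fix j show "0 \<le> y' $ j" using ypos[of j] lp by (simp add: y'_def)
    qed
    have y'b: "y' \<bullet> b \<le> z" using yb lp by (simp add: y'_def divide_le_eq mult.commute)
    have "z \<le> y' \<bullet> b" using weak_duality[OF xsf y'f] by (simp add: z_def)
    have wz: "\<And>y''. dual_feasible A c y'' \<Longrightarrow> z \<le> y'' \<bullet> b"
      using weak_duality[OF xsf] by (simp add: z_def)
    have "dual_optimal A b c y'" using y'f y'b wz by (force simp: dual_optimal_def)
    hence yy: "y' = ys" using du by blast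
    have "c $ i < (y' v* A) $ i"
      using dA[of i] lp by (simp add: y'A less_divide_eq mult.commute)
    moreover have "ys \<bullet> b = z" using yy y'b wz[OF ysf] by simp
    ultimately show ?thesis using yy by (simp add: z_def)
  qed
qed


theorem mainTheorem14:
  fixes A :: "real^'n^'m" and b :: "real^'m" and c :: "real^'n"
    and xs :: "real^'n" and ys :: "real^'m" and x :: "real^'n"
  assumes "primal_optimal A b c xs"
    and "\<forall>x'. primal_optimal A b c x' \<longrightarrow> x' = xs"
    and "dual_optimal A b c ys"
    and "\<forall>y'. dual_optimal A b c y' \<longrightarrow> y' = ys"
    and "primal_feasible A b x"
    and "Ubar xs \<noteq> {}"
  shows "restr_norm x (Ubar xs) \<le> (c \<bullet> (xs - x)) / beta_D A c xs ys"
proof -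
  let ?U = "Ubar xs"
  define \<beta> where "\<beta> = beta_D A c xs ys"
  have K: "\<And>i. i \<in> ?U \<Longrightarrow> c $ i < (ys v* A) $ i \<and> ys \<bullet> b = c \<bullet> xs"
    using key[OF assms(1-4)] by blast
  obtain i0 where i0: "i0 \<in> ?U" using assms(6) by blast
  have sd: "ys \<bullet> b = c \<bullet> xs" using K[OF i0] by blast
  have fin: "finite ?U" by simp
  have bpos: "\<beta> > 0" unfolding \<beta>_def beta_D_def
    using fin assms(6) K by (subst Min_gr_iff) auto
  have ble: "\<beta> \<le> (ys v* A) $ k - c $ k" if "k \<in> ?U" for k
    unfolding \<beta>_def beta_D_def using fin that by (intro Min_le) auto
  have xf: "\<forall>k. 0 \<le> x $ k" using assms(5) by (simp add: primal_feasible_def)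
  have ysf: "dual_feasible A c ys" using assms(3) by (simp add: dual_optimal_def)
  have "restr_norm x ?U \<le> (\<Sum>k\<in>?U. x $ k)"
    unfolding restr_norm_def using L2_set_le_sum[of ?U "\<lambda>k. x $ k"] xf
    by (simp add: L2_set_def)
  hence "\<beta> * restr_norm x ?U \<le> (\<Sum>k\<in>?U. \<beta> * x $ k)"
    using bpos by (simp add: sum_distrib_left[symmetric])
  also have "\<dots> \<le> (\<Sum>k\<in>?U. ((ys v* A) $ k - c $ k) * x $ k)"
    using ble xf by (intro sum_mono mult_right_mono) auto
  also have "\<dots> \<le> (\<Sum>k\<in>UNIV. ((ys v* A) $ k - c $ k) * x $ k)"
    using ysf xf by (intro sum_mono2) (auto simp: dual_feasible_def)
  also have "\<dots> = ys \<bullet> (A *v x) - c \<bullet> x"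
    using vm_inner[of ys A x] by (simp add: inner_vec_def left_diff_distrib sum_subtractf)
  also have "\<dots> \<le> ys \<bullet> b - c \<bullet> x"
  proof -
    have "ys \<bullet> (A *v x) = (\<Sum>j\<in>UNIV. ys $ j * (A *v x) $ j)" by (simp add: inner_vec_def)
    also have "\<dots> \<le> (\<Sum>j\<in>UNIV. ys $ j * b $ j)"
      using assms(5) ysf by (intro sum_mono mult_left_mono) (auto simp: primal_feasible_def dual_feasible_def)
    also have "\<dots> = ys \<bullet> b" by (simp add: inner_vec_def)
    finally show ?thesis by simp
  qed
  also have "\<dots> = c \<bullet> (xs - x)" using sd by (simp add: inner_diff_right)
  finally have "\<beta> * restr_norm x ?U \<le> c \<bullet> (xs - x)" .
  then show ?thesis using bpos by (simp add: \<beta>_def[symmetric] pos_le_divide_eq mult.commute)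
qed

end
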